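(* Let $M(k,l,m,n)=\langle x,y \mid y^m=x^l,\ x^n=1,\ y^{-1}xy=x^k\rangle$ be a metacyclic group, where $\gcd(n,k)=1$, $k^m\equiv 1 \pmod n$ and $l(k-1)\equiv 0\pmod n$. Let $I$ be a set of integers containing exactly one representative of each orbit of the action of the cyclic group $K=\langle y\rangle$ on $\mathbb{Z}/n$ given by $y\cdot u = ku$. For $a\in I$ let $Ka=\{ak^i \bmod n : i\ge 0\}$ be its orbit and $r_a=|Ka|$. For $a,b,c\in I$ put $$S(a,b,c)=\big|\{(r,s)\in Ka\times Kb : r+s\equiv c \pmod n\}\big|,$$ and for $a\in I$ and an integer $\alpha$ put $$e_{a,\alpha}=\frac{n}{\gcd(n,l)}\Big(\alpha+\Big\{\frac{al}{n}\Big\}\Big),$$ where $\{t\}$ denotes the fractional part of $t$ (this is an integer). Let $a,b,c\in I$ with $S(a,b,c)\neq 0$, and let $0\le \alpha<r_c$, $0\le\beta<r_b$, $0\le \gamma<r_c$. Then $$e_{a,\alpha}+e_{b,\beta}-e_{c,\gamma}\equiv 0 \pmod{\frac{n}{\gcd(n,l)}}.$$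
   Context: Here $\gcd(n,0)=n$. The integer $e_{a,\alpha}$ equals $\frac{n\alpha+al-n\lfloor al/n\rfloor}{\gcd(n,l)}$. *)

theory Defs
  imports Complex_Main "HOL-Number_Theory.Cong"
begin

definition orbitK :: "int \<Rightarrow> int \<Rightarrow> int \<Rightarrow> int set" where
  "orbitK n k a = {(a * k ^ i) mod n | i :: nat. True}"

definition orbit_reps :: "int \<Rightarrow> int \<Rightarrow> int set \<Rightarrow> bool" where
  "orbit_reps n k I \<longleftrightarrow> (\<forall>u :: int. \<exists>!a. a \<in> I \<and> orbitK n k a = orbitK n k u)"

definition S_count :: "int \<Rightarrow> int \<Rightarrow> int \<Rightarrow> int \<Rightarrow> int \<Rightarrow> nat" where
  "S_count n k a b c = card {(r, s). r \<in> orbitK n k a \<and> s \<in> orbitK n k b \<and> [r + s = c] (mod n)}"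

definition e_val :: "int \<Rightarrow> int \<Rightarrow> int \<Rightarrow> int \<Rightarrow> int" where
  "e_val n l a \<alpha> = (n * \<alpha> + a * l - n * \<lfloor>real_of_int (a * l) / real_of_int n\<rfloor>) div gcd n l"

end

theory Submission
  imports Defs
begin

lemma lk_pow: assumes "[l * (k - 1) = 0] (mod (n::int))" shows "[l * k ^ i = l] (mod n)"
proof (induction i)
  case 0 then show ?case by simp
next
  case (Suc i)
  have "[l * k = l] (mod n)" using assms
    by (simp add: cong_iff_dvd_diff algebra_simps)
  hence "[l * k * k ^ i = l * k ^ i] (mod n)" by (rule cong_scalar_right)
  hence "[l * k ^ Suc i = l * k ^ i] (mod n)" by (simp add: mult.assoc)
  then show ?case using Suc cong_trans by blast
qed

lemma orbit_cong: assumes "[l * (k - 1) = 0] (mod (n::int))" "r \<in> orbitK n k a"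
  shows "[l * r = l * a] (mod n)"
proof -
  obtain i where r: "r = (a * k ^ i) mod n" using assms(2) unfolding orbitK_def by auto
  have "[l * r = l * (a * k ^ i)] (mod n)" unfolding r
    by (simp add: cong_def mod_mult_right_eq)
  also have "l * (a * k ^ i) = a * (l * k ^ i)" by simp
  also have "[a * (l * k ^ i) = a * l] (mod n)" using lk_pow[OF assms(1)] cong_scalar_left by blast
  finally show ?thesis by (simp add: mult.commute)
qed

lemma e_form: assumes "n > 0" "g = gcd n l" "n = g * N" "l = g * L"
  shows "e_val n l a x = N * x + (a * L) mod N"
proof -
  have g0: "g > 0" using assms(1,2) by simp
  have "\<lfloor>real_of_int (a * l) / real_of_int n\<rfloor> = (a*l) div n" by (rule floor_divide_of_int_eq)
  moreover have "a * l - n * ((a*l) div n) = (a*l) mod n" by (metis minus_mult_div_eq_mod)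
  ultimately have "e_val n l a x = (n * x + (a*l) mod n) div g"
    unfolding e_val_def assms(2)[symmetric] by (metis add_diff_eq)
  also have "(a*l) mod n = g * ((a*L) mod N)" unfolding assms(3,4)
    using mod_mult_mult1[of g "a*L" N] by (simp add: mult.left_commute)
  also have "n * x + g * ((a*L) mod N) = g * (N * x + (a * L) mod N)" unfolding assms(3) by (simp add: algebra_simps)
  finally show ?thesis using g0 by simp
qed

theorem mainTheorem1:
  fixes n k l :: int and m :: nat and I :: "int set" and a b c \<alpha> \<beta> \<gamma> :: int
  assumes "n > 0" and "m > 0"
    and "gcd n k = 1" and "[k ^ m = 1] (mod n)" and "[l * (k - 1) = 0] (mod n)"
    and "orbit_reps n k I"
    and "a \<in> I" and "b \<in> I" and "c \<in> I"
    and "S_count n k a b c \<noteq> 0"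
    and "0 \<le> \<alpha>" and "\<alpha> < int (card (orbitK n k c))"
    and "0 \<le> \<beta>" and "\<beta> < int (card (orbitK n k b))"
    and "0 \<le> \<gamma>" and "\<gamma> < int (card (orbitK n k c))"
  shows "[e_val n l a \<alpha> + e_val n l b \<beta> - e_val n l c \<gamma> = 0] (mod (n div gcd n l))"
proof -
  from assms(10) have "{(r, s). r \<in> orbitK n k a \<and> s \<in> orbitK n k b \<and> [r + s = c] (mod n)} \<noteq> {}"
    unfolding S_count_def by force
  then obtain r s where rs: "r \<in> orbitK n k a" "s \<in> orbitK n k b" "[r + s = c] (mod n)"
    by blast
  have "[l * r = l * a] (mod n)" "[l * s = l * b] (mod n)"
    using orbit_cong[OF assms(5)] rs by auto
  hence "[l * (r + s) = l * (a + b)] (mod n)"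
    using cong_add by (simp add: distrib_left)
  moreover have "[l * (r + s) = l * c] (mod n)" using rs(3) cong_scalar_left by blast
  ultimately have "[l * (a + b) = l * c] (mod n)" using cong_sym cong_trans by blast
  hence dv: "n dvd l * (a + b - c)" by (simp add: cong_iff_dvd_diff algebra_simps)
  define g where "g = gcd n l"
  define N where "N = n div g"
  define L where "L = l div g"
  have g0: "g > 0" using assms(1) g_def by simp
  have nN: "n = g * N" unfolding N_def g_def by simp
  have lL: "l = g * L" unfolding L_def g_def by simp
  have "g * N dvd g * (L * (a + b - c))" using dv nN lL by (simp add: algebra_simps)
  hence dN: "N dvd L * (a + b - c)" using g0 by simp
  have E: "e_val n l x y = N * y + (x * L) mod N" for x y
    using e_form[OF assms(1) g_def nN lL] by simp
  have "[N * \<alpha> + (a * L) mod N + (N * \<beta> + (b * L) mod N) - (N * \<gamma> + (c * L) mod N) = a*L + b*L - c*L] (mod N)"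
    by (intro cong_diff cong_add) (auto simp: cong_def mod_add_right_eq mod_add_left_eq)
  moreover have "[a*L + b*L - c*L = 0] (mod N)" using dN
    by (simp add: cong_0_iff algebra_simps)
  ultimately show ?thesis unfolding E N_def[symmetric] g_def[symmetric] using cong_trans by blast
qed

end
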